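(* Let $A$ be a normed vector space over $\mathbb C$ and give $A^\vee$ the topology of uniform convergence on compact sets. Then on $\mathrm{Max}\,A$ the lower Vietoris topology coincides with the topology generated by the sets $\{V\in\mathrm{Max}\,A: F(V)\cap K'=\emptyset\}$ with $K'\subset A^\vee$ compact.
   Context: $\mathrm{Max}\,A$ is the set of closed subspaces of $A$; its lower Vietoris topology is generated by $\{V:V\cap U\ne\emptyset\}$, $U\subset A$ open. $A^\vee$ is the continuous dual with subbasis $\{\phi:\phi(K)\subset U\}$, $K\subset A$ compact, $U\subset\mathbb C$ open; $F(V)=\{\phi\in A^\vee:\phi|_V=0\}$. *)

theory Defs
  imports "HOL-Analysis.Analysis"
begin

text \<open>Complex vector spaces (HOL only provides real ones): a real vector space
  with a complex scalar multiplication extending the real one.\<close>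

class complex_vector = real_vector +
  fixes scaleC :: "complex \<Rightarrow> 'a \<Rightarrow> 'a"
  assumes scaleC_add_right: "scaleC a (x + y) = scaleC a x + scaleC a y"
    and scaleC_add_left: "scaleC (a + b) x = scaleC a x + scaleC b x"
    and scaleC_scaleC: "scaleC a (scaleC b x) = scaleC (a * b) x"
    and scaleC_one: "scaleC 1 x = x"
    and scaleR_scaleC: "scaleR r x = scaleC (complex_of_real r) x"

class complex_normed_vector = complex_vector + real_normed_vector +
  assumes norm_scaleC: "norm (scaleC a x) = cmod a * norm x"

definition csubspace :: "'a::complex_vector set \<Rightarrow> bool" where
  "csubspace V \<longleftrightarrow> 0 \<in> V \<and> (\<forall>x\<in>V. \<forall>y\<in>V. x + y \<in> V) \<and> (\<forall>c. \<forall>x\<in>V. scaleC c x \<in> V)"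

definition MaxA :: "'a::complex_normed_vector set set" where
  "MaxA = {V. closed V \<and> csubspace V}"

definition clinear_fun :: "('a::complex_vector \<Rightarrow> complex) \<Rightarrow> bool" where
  "clinear_fun f \<longleftrightarrow> (\<forall>x y. f (x + y) = f x + f y) \<and> (\<forall>c x. f (scaleC c x) = c * f x)"

definition cdual :: "('a::complex_normed_vector \<Rightarrow> complex) set" where
  "cdual = {\<phi>. clinear_fun \<phi> \<and> continuous_on UNIV \<phi>}"

text \<open>Topology of uniform convergence on compact sets (compact-open topology) on
  A-dual, with subbasis {\<phi>. \<phi>(K) \<subseteq> U}, K compact in A, U open in \<complex>.\<close>
definition dual_topology :: "('a::complex_normed_vector \<Rightarrow> complex) topology" where
  "dual_topology = topology_generated_by
     {{\<phi>\<in>cdual. \<phi> ` K \<subseteq> U} | K U. compact K \<and> open U}"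

definition annih :: "'a::complex_normed_vector set \<Rightarrow> ('a \<Rightarrow> complex) set" where
  "annih V = {\<phi>\<in>cdual. \<forall>v\<in>V. \<phi> v = 0}"

definition lower_vietoris :: "'a::complex_normed_vector set topology" where
  "lower_vietoris = topology_generated_by {{V\<in>MaxA. V \<inter> U \<noteq> {}} | U. open U}"

definition annih_topology :: "'a::complex_normed_vector set topology" where
  "annih_topology = topology_generated_by
     {{V\<in>MaxA. annih V \<inter> K' = {}} | K'. compactin dual_topology K'}"

end

theory Submission
  imports Defs
begin

lemma scaleC_zero_left [simp]: "scaleC 0 (x::'a::complex_vector) = 0"
  by (metis scaleR_scaleC scaleR_zero_left of_real_0)

lemma scaleC_zero_right [simp]: "scaleC c (0::'a::complex_vector) = 0"
  by (metis add_cancel_right_right scaleC_add_right)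

lemma scaleC_minus_one: "scaleC (-1) (x::'a::complex_vector) = - x"
  by (metis scaleR_scaleC scaleR_minus1_left of_real_1 of_real_minus)

lemma scaleC_real: "scaleC (complex_of_real t) (x::'a::complex_vector) = t *\<^sub>R x"
  by (simp add: scaleR_scaleC)

lemma diff_scaleC: "(x::'a::complex_vector) - y = x + scaleC (-1) y"
  by (simp add: scaleC_minus_one)

lemma clinear_zero: "clinear_fun f \<Longrightarrow> f 0 = 0"
  unfolding clinear_fun_def by (metis add_cancel_right_right add_0)

lemma clinear_diff: "clinear_fun f \<Longrightarrow> f (x - y) = f x - f y"
  unfolding clinear_fun_def diff_scaleC by simp

lemma clinear_scaleR: "clinear_fun f \<Longrightarrow> f (t *\<^sub>R x) = complex_of_real t * f x"
  unfolding clinear_fun_def by (metis scaleC_real)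

lemma clinear_bounded_cont:
  assumes f: "clinear_fun f" and b: "\<And>y. cmod (f y) \<le> C * norm y"
  shows "continuous_on UNIV f"
  unfolding continuous_on_iff
proof (intro ballI allI impI)
  fix x :: 'a and e :: real assume e: "e > 0"
  show "\<exists>d>0. \<forall>x'\<in>UNIV. dist x' x < d \<longrightarrow> dist (f x') (f x) < e"
  proof (intro exI[of _ "e / (\<bar>C\<bar> + 1)"] conjI ballI impI)
    show "e / (\<bar>C\<bar> + 1) > 0" using e by simp
    fix x' assume "dist x' x < e / (\<bar>C\<bar> + 1)"
    hence d: "norm (x' - x) * (\<bar>C\<bar> + 1) < e" by (simp add: dist_norm field_simps)
    have "dist (f x') (f x) = cmod (f (x' - x))" by (simp add: dist_norm clinear_diff[OF f])
    also have "\<dots> \<le> C * norm (x' - x)" by (rule b)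
    also have "\<dots> \<le> norm (x' - x) * (\<bar>C\<bar> + 1)"
      by (smt (verit, ccfv_SIG) mult.commute mult_right_mono norm_ge_zero)
    finally show "dist (f x') (f x) < e" using d by simp
  qed
qed

definition hb_ok :: "real \<Rightarrow> ('a::real_normed_vector \<times> real) set \<Rightarrow> bool" where
"hb_ok c G \<longleftrightarrow> (0,0) \<in> G \<and> (\<forall>a s b t. (a,s)\<in>G \<longrightarrow> (b,t)\<in>G \<longrightarrow> (a+b, s+t) \<in> G)
   \<and> (\<forall>r a s. (a,s)\<in>G \<longrightarrow> (r *\<^sub>R a, r * s) \<in> G) \<and> (\<forall>a s. (a,s)\<in>G \<longrightarrow> s \<le> c * norm a)"

lemma hb_okD:
  assumes "hb_ok c G"
  shows hb_zero: "(0,0) \<in> G"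
    and hb_add: "\<And>a s b t. (a,s)\<in>G \<Longrightarrow> (b,t)\<in>G \<Longrightarrow> (a+b, s+t) \<in> G"
    and hb_scale: "\<And>r a s. (a,s)\<in>G \<Longrightarrow> (r *\<^sub>R a, r * s) \<in> G"
    and hb_bound: "\<And>a s. (a,s)\<in>G \<Longrightarrow> s \<le> c * norm a"
  using assms unfolding hb_ok_def by blast+

lemma hb_okI:
  assumes "(0,0) \<in> G"
    and "\<And>a s b t. (a,s)\<in>G \<Longrightarrow> (b,t)\<in>G \<Longrightarrow> (a+b, s+t) \<in> G"
    and "\<And>r a s. (a,s)\<in>G \<Longrightarrow> (r *\<^sub>R a, r * s) \<in> G"
    and "\<And>a s. (a,s)\<in>G \<Longrightarrow> s \<le> c * norm a"
  shows "hb_ok c G"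
  using assms unfolding hb_ok_def by blast

lemma hb_unique:
  assumes ok: "hb_ok c G" and "(a,s) \<in> G" "(a,t) \<in> G" shows "s = t"
proof -
  have "(a + -1 *\<^sub>R a, s + -1 * t) \<in> G" by (rule hb_add[OF ok assms(2) hb_scale[OF ok assms(3)]])
  hence "s - t \<le> 0" using hb_bound[OF ok] by fastforce
  have "(a + -1 *\<^sub>R a, t + -1 * s) \<in> G" by (rule hb_add[OF ok assms(3) hb_scale[OF ok assms(2)]])
  hence "t - s \<le> 0" using hb_bound[OF ok] by fastforce
  thus ?thesis using \<open>s - t \<le> 0\<close> by simp
qed

lemma hb_extend:
  fixes M :: "('a::real_normed_vector \<times> real) set"
  assumes ok: "hb_ok c M" and c: "c \<ge> 0" and z: "\<forall>s. (z,s) \<notin> M"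
  shows "\<exists>M'. hb_ok c M' \<and> M \<subseteq> M' \<and> M' \<noteq> M"
proof -
  define S where "S = {s - c * norm (a - z) | a s. (a,s) \<in> M}"
  define \<alpha> where "\<alpha> = Sup S"
  have key: "s - c * norm (a - z) \<le> c * norm (b + z) - t" if "(a,s)\<in>M" "(b,t)\<in>M" for a s b t
  proof -
    have "(a+b, s+t) \<in> M" by (rule hb_add[OF ok that])
    hence "s + t \<le> c * norm (a + b)" by (rule hb_bound[OF ok])
    also have "norm (a + b) \<le> norm (a - z) + norm (b + z)"
      using norm_triangle_ineq[of "a - z" "b + z"] by simp
    hence "c * norm (a + b) \<le> c * norm (a - z) + c * norm (b + z)"
      using c by (metis distrib_left mult_left_mono)
    finally show ?thesis by simp
  qed
  have ne: "S \<noteq> {}" using hb_zero[OF ok] unfolding S_def by blast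
  have bdd: "bdd_above S" unfolding S_def bdd_above_def
    using key[of _ _ 0 0] hb_zero[OF ok] by auto
  have lo: "s - c * norm (a - z) \<le> \<alpha>" if "(a,s)\<in>M" for a s
    unfolding \<alpha>_def by (rule cSup_upper[OF _ bdd]) (use that S_def in blast)
  have hi: "\<alpha> \<le> c * norm (b + z) - t" if "(b,t)\<in>M" for b t
    unfolding \<alpha>_def by (rule cSup_least[OF ne]) (use key that S_def in blast)
  define M' where "M' = {(a + r *\<^sub>R z, s + r * \<alpha>) | a s r. (a,s) \<in> M}"
  have "hb_ok c M'"
  proof (rule hb_okI)
    have "(0 + 0 *\<^sub>R z, 0 + 0 * \<alpha>) \<in> M'" unfolding M'_def using hb_zero[OF ok] by blast
    thus "(0,0) \<in> M'" by simp
  next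
    fix a s b t assume "(a,s)\<in>M'" "(b,t)\<in>M'"
    then obtain a1 s1 r1 a2 s2 r2 where 1: "a = a1 + r1 *\<^sub>R z" "s = s1 + r1 * \<alpha>" "(a1,s1)\<in>M"
      and 2: "b = a2 + r2 *\<^sub>R z" "t = s2 + r2 * \<alpha>" "(a2,s2)\<in>M" unfolding M'_def by blast
    have "(a1+a2, s1+s2) \<in> M" by (rule hb_add[OF ok 1(3) 2(3)])
    moreover have "a + b = (a1+a2) + (r1+r2) *\<^sub>R z" "s + t = (s1+s2) + (r1+r2)*\<alpha>"
      using 1 2 by (auto simp: algebra_simps)
    ultimately show "(a+b, s+t) \<in> M'" unfolding M'_def by blast
  next
    fix q a s assume "(a,s)\<in>M'"
    then obtain a1 s1 r1 where 1: "a = a1 + r1 *\<^sub>R z" "s = s1 + r1 * \<alpha>" "(a1,s1)\<in>M"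
      unfolding M'_def by blast
    have "(q *\<^sub>R a1, q * s1) \<in> M" by (rule hb_scale[OF ok 1(3)])
    moreover have "q *\<^sub>R a = q *\<^sub>R a1 + (q*r1) *\<^sub>R z" "q * s = q * s1 + (q*r1)*\<alpha>"
      using 1 by (auto simp: algebra_simps)
    ultimately show "(q *\<^sub>R a, q * s) \<in> M'" unfolding M'_def by blast
  next
    fix a s assume "(a,s)\<in>M'"
    then obtain a1 s1 r where 1: "a = a1 + r *\<^sub>R z" "s = s1 + r * \<alpha>" "(a1,s1)\<in>M"
      unfolding M'_def by blast
    consider "r = 0" | "r > 0" | "r < 0" by linarith
    thus "s \<le> c * norm a"
    proof cases
      case 1 thus ?thesis using \<open>(a1,s1)\<in>M\<close> \<open>a = _\<close> \<open>s = _\<close> hb_bound[OF ok] by auto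
    next
      case 2
      have "((1/r) *\<^sub>R a1, (1/r) * s1) \<in> M" by (rule hb_scale[OF ok 1(3)])
      from hi[OF this] have h: "\<alpha> \<le> c * norm ((1/r) *\<^sub>R a1 + z) - (1/r) * s1" .
      have "r * \<alpha> \<le> r * (c * norm ((1/r) *\<^sub>R a1 + z) - (1/r) * s1)"
        using mult_left_mono[OF h] 2 by simp
      also have "\<dots> = r * (c * norm ((1/r) *\<^sub>R a1 + z)) - s1" using 2 by (simp add: algebra_simps)
      also have "r * (c * norm ((1/r) *\<^sub>R a1 + z)) = c * norm (r *\<^sub>R ((1/r) *\<^sub>R a1 + z))"
        using 2 by simp
      also have "r *\<^sub>R ((1/r) *\<^sub>R a1 + z) = a" using 2 1 by (simp add: scaleR_add_right)
      finally show ?thesis using 1 by simp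
    next
      case 3
      define q where "q = -1/r"
      have q: "q > 0" using 3 q_def by simp
      have "(q *\<^sub>R a1, q * s1) \<in> M" by (rule hb_scale[OF ok 1(3)])
      from lo[OF this] have h: "q * s1 - c * norm (q *\<^sub>R a1 - z) \<le> \<alpha>" .
      have ineq: "(-r) * (q * s1 - c * norm (q *\<^sub>R a1 - z)) \<le> (-r) * \<alpha>" using 3
        by (intro mult_left_mono[OF h]) simp
      have qs: "(-r) * (q * s1) = s1" using 3 q_def by simp
      have av: "a = (-r) *\<^sub>R (q *\<^sub>R a1 - z)" using 3 1 q_def by (simp add: algebra_simps)
      have n: "norm a = (-r) * norm (q *\<^sub>R a1 - z)" unfolding av using 3 by simp
      have "s1 - c * norm a = (-r) * (q * s1 - c * norm (q *\<^sub>R a1 - z))"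
        unfolding n using qs by (simp add: algebra_simps)
      hence "s1 - c * norm a \<le> (-r) * \<alpha>" using ineq by linarith
      thus ?thesis using 1 by (simp add: algebra_simps)
    qed
  qed
  moreover have "M \<subseteq> M'"
  proof
    fix p assume "p \<in> M"
    then obtain a s where "p = (a,s)" "(a,s)\<in>M" by (cases p) auto
    moreover have "(a + 0 *\<^sub>R z, s + 0 * \<alpha>) \<in> M'" using calculation(2) unfolding M'_def by blast
    ultimately show "p \<in> M'" by simp
  qed
  moreover have "(z, \<alpha>) \<in> M'"
  proof -
    have "(0 + 1 *\<^sub>R z, 0 + 1 * \<alpha>) \<in> M'" unfolding M'_def using hb_zero[OF ok] by blast
    thus ?thesis by simp
  qed
  ultimately show ?thesis using z by blast
qed

lemma real_HB:
  fixes G0 :: "('a::real_normed_vector \<times> real) set"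
  assumes ok: "hb_ok c G0" and c: "c \<ge> 0"
  shows "\<exists>f. (\<forall>a b. f (a+b) = f a + f b) \<and> (\<forall>t a. f (t *\<^sub>R a) = t * f a)
           \<and> (\<forall>a s. (a,s)\<in>G0 \<longrightarrow> f a = s) \<and> (\<forall>a. f a \<le> c * norm a)"
proof -
  define A where "A = {G. G0 \<subseteq> G \<and> hb_ok c G}"
  have "\<exists>M\<in>A. \<forall>X\<in>A. M \<subseteq> X \<longrightarrow> X = M"
  proof (rule subset_Zorn_nonempty)
    show "A \<noteq> {}" using ok A_def by blast
    fix C assume C: "C \<noteq> {}" "subset.chain A C"
    have sub: "\<And>X. X \<in> C \<Longrightarrow> G0 \<subseteq> X \<and> hb_ok c X"
      using C(2) unfolding subset_chain_def A_def by auto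
    have ch: "\<And>X Y. X\<in>C \<Longrightarrow> Y\<in>C \<Longrightarrow> X \<subseteq> Y \<or> Y \<subseteq> X"
      using C(2) unfolding subset_chain_def by blast
    obtain X0 where X0: "X0 \<in> C" using C by blast
    have "hb_ok c (\<Union>C)"
    proof (rule hb_okI)
      show "(0,0) \<in> \<Union>C" using X0 sub hb_zero by blast
    next
      fix a s b t assume "(a,s) \<in> \<Union>C" "(b,t) \<in> \<Union>C"
      then obtain X Y where XY: "X\<in>C" "Y\<in>C" "(a,s)\<in>X" "(b,t)\<in>Y" by blast
      show "(a+b, s+t) \<in> \<Union>C"
      proof (cases "X \<subseteq> Y")
        case True thus ?thesis using XY sub hb_add by blast
      next
        case False hence "Y \<subseteq> X" using ch XY by blast
        thus ?thesis using XY sub hb_add by blast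
      qed
    next
      fix r a s assume "(a,s) \<in> \<Union>C"
      then obtain X where "X\<in>C" "(a,s)\<in>X" by blast
      then show "(r *\<^sub>R a, r * s) \<in> \<Union>C" using sub hb_scale by blast
    next
      fix a s assume "(a,s) \<in> \<Union>C"
      then obtain X where "X\<in>C" "(a,s)\<in>X" by blast
      then show "s \<le> c * norm a" using sub hb_bound by blast
    qed
    moreover have "G0 \<subseteq> \<Union>C" using X0 sub by blast
    ultimately show "\<Union>C \<in> A" unfolding A_def by blast
  qed
  then obtain M where M: "M \<in> A" and max: "\<And>X. X\<in>A \<Longrightarrow> M \<subseteq> X \<Longrightarrow> X = M" by blast
  have okM: "hb_ok c M" and G0M: "G0 \<subseteq> M" using M A_def by auto
  have tot: "\<exists>s. (z,s) \<in> M" for z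
  proof (rule ccontr)
    assume "\<not> ?thesis"
    then obtain M' where "hb_ok c M'" "M \<subseteq> M'" "M' \<noteq> M" using hb_extend[OF okM c] by blast
    moreover have "M' \<in> A" using calculation G0M A_def by blast
    ultimately show False using max by blast
  qed
  define f where "f z = (SOME s. (z,s) \<in> M)" for z
  have fM: "(z, f z) \<in> M" for z unfolding f_def using tot someI_ex by metis
  have fe: "(z,s) \<in> M \<Longrightarrow> f z = s" for z s using hb_unique[OF okM fM] by blast
  show ?thesis
  proof (intro exI[of _ f] conjI allI impI)
    fix a b show "f (a+b) = f a + f b" using fe[OF hb_add[OF okM fM fM]] .
  next
    fix t a show "f (t *\<^sub>R a) = t * f a" using fe[OF hb_scale[OF okM fM]] .
  next
    fix a s assume "(a,s) \<in> G0" thus "f a = s" using fe G0M by blast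
  next
    fix a show "f a \<le> c * norm a" using hb_bound[OF okM fM] .
  qed
qed

lemma scaleC_decomp: "scaleC c (y::'a::complex_vector) = Re c *\<^sub>R y + Im c *\<^sub>R scaleC \<i> y"
proof -
  have e: "complex_of_real (Re c) + complex_of_real (Im c) * \<i> = c" by (simp add: complex_eq_iff)
  have "Re c *\<^sub>R y + Im c *\<^sub>R scaleC \<i> y = scaleC (complex_of_real (Re c)) y + scaleC (complex_of_real (Im c) * \<i>) y"
    by (simp add: scaleR_scaleC scaleC_scaleC)
  also have "\<dots> = scaleC c y" by (simp add: scaleC_add_left[symmetric] e)
  finally show ?thesis by simp
qed

lemma csubspace_scaleC: "csubspace V \<Longrightarrow> v \<in> V \<Longrightarrow> scaleC c v \<in> V"
  unfolding csubspace_def by blast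

lemma csubspace_add: "csubspace V \<Longrightarrow> v \<in> V \<Longrightarrow> w \<in> V \<Longrightarrow> v + w \<in> V"
  unfolding csubspace_def by blast

lemma csubspace_0: "csubspace V \<Longrightarrow> 0 \<in> V"
  unfolding csubspace_def by blast

lemma complex_HB:
  fixes V :: "'a::complex_normed_vector set" and x :: 'a
  assumes V: "csubspace V" and r: "r > 0" and d: "\<forall>v\<in>V. r \<le> norm (x - v)"
  shows "\<exists>\<phi>\<in>cdual. \<phi> x = 1 \<and> (\<forall>v\<in>V. \<phi> v = 0) \<and> (\<forall>y. cmod (\<phi> y) \<le> (1/r) * norm y)"
proof -
  define G0 where "G0 = {(v + scaleC c x, Re c) | v c. v \<in> V}"
  have ok: "hb_ok (1/r) G0"
  proof (rule hb_okI)
    have "(0 + scaleC 0 x, Re 0) \<in> G0" unfolding G0_def using csubspace_0[OF V] by blast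
    thus "(0,0) \<in> G0" by simp
  next
    fix a s b t assume "(a,s) \<in> G0" "(b,t) \<in> G0"
    then obtain v1 c1 v2 c2 where 1: "a = v1 + scaleC c1 x" "s = Re c1" "v1 \<in> V"
      and 2: "b = v2 + scaleC c2 x" "t = Re c2" "v2 \<in> V" unfolding G0_def by blast
    have "a + b = (v1 + v2) + scaleC (c1 + c2) x" using 1 2 by (simp add: scaleC_add_left algebra_simps)
    moreover have "s + t = Re (c1 + c2)" using 1 2 by simp
    moreover have "v1 + v2 \<in> V" using csubspace_add[OF V 1(3) 2(3)] .
    ultimately show "(a+b, s+t) \<in> G0" unfolding G0_def by blast
  next
    fix q a s assume "(a,s) \<in> G0"
    then obtain v c where 1: "a = v + scaleC c x" "s = Re c" "v \<in> V" unfolding G0_def by blast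
    have "q *\<^sub>R a = scaleC (complex_of_real q) v + scaleC (complex_of_real q * c) x"
      using 1 by (simp add: scaleR_scaleC scaleC_add_right scaleC_scaleC)
    moreover have "q * s = Re (complex_of_real q * c)" using 1 by simp
    moreover have "scaleC (complex_of_real q) v \<in> V" using csubspace_scaleC[OF V 1(3)] .
    ultimately show "(q *\<^sub>R a, q * s) \<in> G0" unfolding G0_def by blast
  next
    fix a s assume "(a,s) \<in> G0"
    then obtain v c where 1: "a = v + scaleC c x" "s = Re c" "v \<in> V" unfolding G0_def by blast
    have "cmod c * r \<le> norm a"
    proof (cases "c = 0")
      case True thus ?thesis by simp
    next
      case False
      define w where "w = scaleC (-1/c) v"
      have wV: "w \<in> V" unfolding w_def using csubspace_scaleC[OF V 1(3)] .
      have "scaleC c (x - w) = scaleC c x + scaleC (c * (-1) * (-1/c)) v"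
        unfolding w_def diff_scaleC by (simp add: scaleC_add_right scaleC_scaleC)
      also have "c * (-1) * (-1/c) = 1" using False by simp
      finally have "a = scaleC c (x - w)" using 1 by (simp add: scaleC_one add.commute)
      hence "norm a = cmod c * norm (x - w)" by (simp add: norm_scaleC)
      moreover have "r \<le> norm (x - w)" using d wV by blast
      ultimately show ?thesis by (simp add: mult_left_mono)
    qed
    hence "cmod c \<le> (1/r) * norm a" using r by (simp add: field_simps)
    moreover have "Re c \<le> cmod c" by (rule complex_Re_le_cmod)
    ultimately show "s \<le> (1/r) * norm a" using 1 by linarith
  qed
  obtain u where uadd: "\<And>a b. u (a+b) = u a + u b" and uscale: "\<And>t a. u (t *\<^sub>R a) = t * u a"
    and uG: "\<And>a s. (a,s)\<in>G0 \<Longrightarrow> u a = s" and ub: "\<And>a. u a \<le> (1/r) * norm a"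
    using real_HB[OF ok] r by force
  have udiff: "u (a - b) = u a - u b" for a b
    using uadd[of a "(-1) *\<^sub>R b"] uscale[of "-1" b] by simp
  have ux: "u x = 1"
  proof -
    have "(0 + scaleC 1 x, Re 1) \<in> G0" unfolding G0_def using csubspace_0[OF V] by blast
    thus ?thesis using uG by (simp add: scaleC_one)
  qed
  have uix: "u (scaleC \<i> x) = 0"
  proof -
    have "(0 + scaleC \<i> x, Re \<i>) \<in> G0" unfolding G0_def using csubspace_0[OF V] by blast
    thus ?thesis using uG by simp
  qed
  have uV: "u v = 0" if "v \<in> V" for v
  proof -
    have "(v + scaleC 0 x, Re 0) \<in> G0" unfolding G0_def using that by blast
    thus ?thesis using uG by simp
  qed
  define \<phi> where "\<phi> y = complex_of_real (u y) - \<i> * complex_of_real (u (scaleC \<i> y))" for y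
  have phiadd: "\<phi> (a + b) = \<phi> a + \<phi> b" for a b
    unfolding \<phi>_def by (simp add: uadd scaleC_add_right algebra_simps)
  have phiscale: "\<phi> (scaleC c y) = c * \<phi> y" for c y
  proof -
    have d1: "u (scaleC c y) = Re c * u y + Im c * u (scaleC \<i> y)"
      by (simp add: scaleC_decomp[of c y] uadd uscale)
    have "scaleC \<i> (scaleC c y) = scaleC (\<i> * c) y" by (simp add: scaleC_scaleC)
    hence d2: "u (scaleC \<i> (scaleC c y)) = - Im c * u y + Re c * u (scaleC \<i> y)"
      by (simp add: scaleC_decomp[of "\<i> * c" y] uadd uscale udiff)
    show ?thesis unfolding \<phi>_def d1 d2 by (simp add: complex_eq_iff algebra_simps)
  qed
  have lin: "clinear_fun \<phi>" unfolding clinear_fun_def using phiadd phiscale by blast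
  have Re_phi: "Re (\<phi> y) = u y" for y unfolding \<phi>_def by simp
  have bnd: "cmod (\<phi> y) \<le> (1/r) * norm y" for y
  proof (cases "\<phi> y = 0")
    case True thus ?thesis using r by simp
  next
    case False
    define k where "k = cnj (\<phi> y) / complex_of_real (cmod (\<phi> y))"
    have "\<phi> (scaleC k y) = k * \<phi> y" by (rule phiscale)
    also have "\<dots> = complex_of_real (cmod (\<phi> y))" unfolding k_def using False
      by (simp add: field_simps complex_norm_square[symmetric] power2_eq_square)
    finally have "cmod (\<phi> y) = u (scaleC k y)" using Re_phi by (metis Re_complex_of_real)
    also have "\<dots> \<le> (1/r) * norm (scaleC k y)" by (rule ub)
    also have "norm (scaleC k y) = norm y" unfolding k_def norm_scaleC using False
      by (simp add: norm_divide)
    finally show ?thesis .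
  qed
  have "\<phi> \<in> cdual" unfolding cdual_def using lin clinear_bounded_cont[OF lin bnd] by blast
  moreover have "\<phi> x = 1" unfolding \<phi>_def using ux uix by simp
  moreover have "\<forall>v\<in>V. \<phi> v = 0" unfolding \<phi>_def using uV csubspace_scaleC[OF V] by simp
  ultimately show ?thesis using bnd by blast
qed

lemma cdual_clinear: "\<phi> \<in> cdual \<Longrightarrow> clinear_fun \<phi>"
  unfolding cdual_def by blast

lemma cdual_cont: "\<phi> \<in> cdual \<Longrightarrow> continuous_on UNIV \<phi>"
  unfolding cdual_def by blast

lemma dual_topspace: "topspace (dual_topology :: ('a::complex_normed_vector \<Rightarrow> complex) topology) = cdual"
proof -
  have "{\<phi>\<in>cdual. \<phi> ` {} \<subseteq> UNIV} \<in> {{\<phi>\<in>(cdual::('a \<Rightarrow> complex) set). \<phi> ` K \<subseteq> U} | K U. compact K \<and> open U}"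
    by blast
  hence "cdual \<subseteq> \<Union>{{\<phi>\<in>(cdual::('a \<Rightarrow> complex) set). \<phi> ` K \<subseteq> U} | K U. compact K \<and> open U}" by auto
  thus ?thesis unfolding dual_topology_def topology_generated_by_topspace by blast
qed

lemma compact_Kprime:
  fixes x :: "'a::complex_normed_vector" and C :: real
  assumes C: "C \<ge> 0"
  shows "compactin dual_topology {\<phi>\<in>cdual. \<phi> x = 1 \<and> (\<forall>y. cmod (\<phi> y) \<le> C * norm y)}"
proof -
  define T where "T = product_topology (\<lambda>y::'a. top_of_set (cball (0::complex) (C * norm y))) UNIV"
  have topT: "topspace T = {f. \<forall>y. cmod (f y) \<le> C * norm y}"
    unfolding T_def by (simp add: PiE_UNIV_domain Pi_def)
  have cT: "compact_space T" unfolding T_def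
  proof (rule iffD2[OF compact_space_product_topology], rule disjI2, intro ballI)
    fix y :: 'a
    show "compact_space (top_of_set (cball (0::complex) (C * norm y)))"
      using compact_space_subtopology[of euclidean "cball (0::complex) (C * norm y)"] compact_cball[of 0 "C * norm y"]
      by (simp only: compactin_euclidean_iff)
  qed
  have proj: "continuous_map T euclidean (\<lambda>f. f a)" for a
    unfolding T_def
    by (rule continuous_map_into_fulltopology[where T="cball 0 (C * norm a)"],
        rule continuous_map_product_projection[where X="\<lambda>y::'a. top_of_set (cball (0::complex) (C * norm y))" and k=a and I=UNIV, simplified])
  have projc: "continuous_map T euclidean (\<lambda>f. c * f a)" for a c
  proof -
    have "continuous_map euclidean euclidean (\<lambda>z::complex. c * z)" by (simp add: continuous_intros)
    from continuous_map_compose[OF proj this] show ?thesis by (simp add: o_def)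
  qed
  define E where "E = {{f \<in> topspace T. f (a+b) = f a + f b} | a b. True}
     \<union> {{f \<in> topspace T. f (scaleC c a) = c * f a} | c a. True} \<union> {{f \<in> topspace T. f x = 1}}"
  define P where "P = \<Inter>E"
  have clP: "closedin T P" unfolding P_def
  proof (rule closedin_Inter)
    show "E \<noteq> {}" unfolding E_def by blast
    fix S assume "S \<in> E"
    then consider (1) a b where "S = {f \<in> topspace T. f (a+b) = f a + f b}"
      | (2) c a where "S = {f \<in> topspace T. f (scaleC c a) = c * f a}"
      | (3) "S = {f \<in> topspace T. f x = 1}" unfolding E_def by blast
    then show "closedin T S"
    proof cases
      case 1 thus ?thesis
        using closedin_continuous_maps_eq[OF Hausdorff_space_euclidean proj continuous_map_add[OF proj proj]] by simp
    next
      case 2 thus ?thesis using closedin_continuous_maps_eq[OF Hausdorff_space_euclidean proj projc] by simp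
    next
      case 3 thus ?thesis using closedin_continuous_maps_eq[OF Hausdorff_space_euclidean proj continuous_map_const[THEN iffD2]]
        by simp
    qed
  qed
  have Peq: "P = {f \<in> topspace T. clinear_fun f \<and> f x = 1}"
  proof (intro set_eqI iffI)
    fix f assume "f \<in> P"
    hence h: "\<And>S. S \<in> E \<Longrightarrow> f \<in> S" unfolding P_def by blast
    have "f \<in> {f \<in> topspace T. f x = 1}" by (rule h) (simp add: E_def)
    moreover have "f \<in> {f \<in> topspace T. f (a+b) = f a + f b}" for a b by (rule h) (auto simp: E_def)
    moreover have "f \<in> {f \<in> topspace T. f (scaleC c a) = c * f a}" for c a by (rule h) (auto simp: E_def)
    ultimately show "f \<in> {f \<in> topspace T. clinear_fun f \<and> f x = 1}" unfolding clinear_fun_def by blast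
  next
    fix f assume "f \<in> {f \<in> topspace T. clinear_fun f \<and> f x = 1}"
    hence "f \<in> topspace T" "clinear_fun f" "f x = 1" by auto
    thus "f \<in> P" unfolding P_def E_def clinear_fun_def by blast
  qed
  have PK: "P = {\<phi>\<in>cdual. \<phi> x = 1 \<and> (\<forall>y. cmod (\<phi> y) \<le> C * norm y)}"
  proof (intro set_eqI iffI)
    fix f assume "f \<in> P"
    hence "clinear_fun f" "f x = 1" "\<And>y. cmod (f y) \<le> C * norm y" unfolding Peq topT by auto
    thus "f \<in> {\<phi>\<in>cdual. \<phi> x = 1 \<and> (\<forall>y. cmod (\<phi> y) \<le> C * norm y)}"
      unfolding cdual_def using clinear_bounded_cont by blast
  next
    fix f assume "f \<in> {\<phi>\<in>cdual. \<phi> x = 1 \<and> (\<forall>y. cmod (\<phi> y) \<le> C * norm y)}"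
    thus "f \<in> P" unfolding Peq topT cdual_def by auto
  qed
  have bndP: "f \<in> P \<Longrightarrow> cmod (f y) \<le> C * norm y" for f y unfolding PK by blast
  have PC: "P \<subseteq> cdual" unfolding PK by blast
  have cP: "compactin T P" by (rule closedin_compact_space[OF cT clP])
  have cont: "continuous_map (subtopology T P) dual_topology id"
    unfolding dual_topology_def
  proof (rule continuous_on_generated_topo)
    have tsub: "topspace (subtopology T P) = P" using closedin_subset[OF clP] by auto
    show "id ` topspace (subtopology T P) \<subseteq> \<Union>{{\<phi>\<in>cdual. \<phi> ` K \<subseteq> U} | K U. compact K \<and> open U}"
    proof -
      have du: "\<Union>{{\<phi>\<in>(cdual::('a\<Rightarrow>complex) set). \<phi> ` K \<subseteq> U} | K U. compact K \<and> open U} = cdual"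
        using dual_topspace[where 'a='a] unfolding dual_topology_def topology_generated_by_topspace .
      show ?thesis unfolding du using PC tsub by simp
    qed
    fix U0 assume "U0 \<in> {{\<phi>\<in>(cdual::('a\<Rightarrow>complex) set). \<phi> ` K \<subseteq> U} | K U. compact K \<and> open U}"
    then obtain K Ob where U0: "U0 = {\<phi>\<in>cdual. \<phi> ` K \<subseteq> Ob}" and K: "compact K" and Ob: "open Ob" by blast
    have "openin (subtopology T P) (U0 \<inter> P)"
    proof (subst openin_subopen, intro ballI)
      fix f0 assume f0: "f0 \<in> U0 \<inter> P"
      have f0c: "continuous_on UNIV f0" using f0 U0 cdual_cont by blast
      have f0lin: "clinear_fun f0" using f0 U0 cdual_clinear by blast
      have cK: "compact (f0 ` K)" using compact_continuous_image[OF continuous_on_subset[OF f0c] K] by simp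
      have "\<exists>\<delta>>0. \<forall>a\<in>f0 ` K. \<forall>b\<in>- Ob. \<delta> \<le> dist a b"
        by (rule separate_compact_closed[OF cK]) (use Ob f0 U0 in auto)
      then obtain \<epsilon> where \<epsilon>: "\<epsilon> > 0" and sep: "\<And>a b. a \<in> f0 ` K \<Longrightarrow> b \<in> - Ob \<Longrightarrow> \<epsilon> \<le> dist a b"
        by blast
      have ballO: "k \<in> K \<Longrightarrow> dist (f0 k) w < \<epsilon> \<Longrightarrow> w \<in> Ob" for k w
        using sep[of "f0 k" w] by force
      define \<eta> where "\<eta> = \<epsilon> / (3 * (C + 1))"
      have \<eta>: "\<eta> > 0" using \<epsilon> C \<eta>_def by simp
      have C\<eta>: "C * \<eta> < \<epsilon> / 3" unfolding \<eta>_def using \<epsilon> C by (simp add: field_simps)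
      obtain D where D: "D \<subseteq> K" "finite D" "K \<subseteq> (\<Union>k\<in>D. ball k \<eta>)"
        using compactE_image[OF K, of K "\<lambda>k. ball k \<eta>"] \<eta> by force
      define S where "S y = (if y \<in> D then cball 0 (C * norm y) \<inter> ball (f0 y) (\<epsilon>/3) else cball 0 (C * norm y))" for y
      define W where "W = P \<inter> PiE UNIV S"
      have "openin T (PiE UNIV S)" unfolding T_def openin_PiE_gen
      proof (rule disjI2, intro conjI ballI)
        show "finite {i \<in> UNIV. S i \<noteq> topspace (top_of_set (cball 0 (C * norm i)))}"
          by (rule finite_subset[OF _ D(2)]) (auto simp: S_def)
        fix i show "openin (top_of_set (cball 0 (C * norm i))) (S i)"
          by (auto simp: S_def)
      qed
      hence oW: "openin (subtopology T P) W" unfolding W_def by (rule openin_subtopology_Int2)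
      have "f0 \<in> W" unfolding W_def S_def using f0 bndP \<epsilon> by (auto simp: PiE_UNIV_domain)
      moreover have "W \<subseteq> U0 \<inter> P"
      proof
        fix f assume fW: "f \<in> W"
        hence fP: "f \<in> P" unfolding W_def by blast
        have flin: "clinear_fun f" using fP PC cdual_clinear by blast
        have close: "i \<in> D \<Longrightarrow> dist (f0 i) (f i) < \<epsilon>/3" for i
        proof -
          assume iD: "i \<in> D"
          have "f \<in> PiE UNIV S" using fW unfolding W_def by blast
          hence "f i \<in> S i" by (simp add: PiE_UNIV_domain Pi_def)
          thus ?thesis using iD unfolding S_def by simp
        qed
        have "f k \<in> Ob" if k: "k \<in> K" for k
        proof -
          obtain i where i: "i \<in> D" "dist i k < \<eta>" using D(3) k by auto
          have e1: "cmod (f k - f i) < \<epsilon>/3"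
          proof -
            have "cmod (f k - f i) = cmod (f (k - i))" by (simp add: clinear_diff[OF flin])
            also have "\<dots> \<le> C * norm (k - i)" by (rule bndP[OF fP])
            also have "\<dots> \<le> C * \<eta>" using i C by (simp add: dist_norm norm_minus_commute mult_left_mono)
            finally show ?thesis using C\<eta> by linarith
          qed
          have e3: "cmod (f0 i - f0 k) < \<epsilon>/3"
          proof -
            have "cmod (f0 i - f0 k) = cmod (f0 (i - k))" by (simp add: clinear_diff[OF f0lin])
            also have "\<dots> \<le> C * norm (i - k)" by (rule bndP) (use f0 in blast)
            also have "\<dots> \<le> C * \<eta>" using i C by (simp add: dist_norm mult_left_mono)
            finally show ?thesis using C\<eta> by linarith
          qed
          have e2: "cmod (f i - f0 i) < \<epsilon>/3" using close[OF i(1)] by (simp add: dist_norm norm_minus_commute)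
          have "dist (f0 k) (f k) = cmod ((f k - f i) + (f i - f0 i) + (f0 i - f0 k))"
            by (simp add: dist_norm norm_minus_commute)
          also have "\<dots> \<le> cmod (f k - f i) + cmod (f i - f0 i) + cmod (f0 i - f0 k)"
            by (rule order_trans[OF norm_triangle_ineq add_right_mono[OF norm_triangle_ineq]])
          finally have "dist (f0 k) (f k) \<le> cmod (f k - f i) + cmod (f i - f0 i) + cmod (f0 i - f0 k)" .
          hence "dist (f0 k) (f k) < \<epsilon>" using e1 e2 e3 by linarith
          thus "f k \<in> Ob" using ballO[OF k] by blast
        qed
        thus "f \<in> U0 \<inter> P" using fP PC unfolding U0 by blast
      qed
      ultimately show "\<exists>W. openin (subtopology T P) W \<and> f0 \<in> W \<and> W \<subseteq> U0 \<inter> P" using oW by blast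
    qed
    moreover have "id -` U0 \<inter> topspace (subtopology T P) = U0 \<inter> P" using tsub by auto
    ultimately show "openin (subtopology T P) (id -` U0 \<inter> topspace (subtopology T P))" by simp
  qed
  have "compactin (subtopology T P) P" using cP by (simp add: compactin_subtopology)
  from image_compactin[OF this cont] show ?thesis using PK by simp
qed

lemma compact_convergent_insert:
  fixes z :: "nat \<Rightarrow> 'a::metric_space"
  assumes lim: "z \<longlonglongrightarrow> l"
  shows "compact (insert l (range z))"
proof (rule compactI)
  fix C assume oC: "\<forall>t\<in>C. open t" and cov: "insert l (range z) \<subseteq> \<Union>C"
  obtain c0 where c0: "c0 \<in> C" "l \<in> c0" using cov by blast
  have "eventually (\<lambda>n. z n \<in> c0) sequentially"
    using topological_tendstoD[OF lim] oC c0 by blast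
  then obtain N where N: "\<And>n. n \<ge> N \<Longrightarrow> z n \<in> c0" unfolding eventually_sequentially by blast
  have "\<forall>n. \<exists>c\<in>C. z n \<in> c" using cov by blast
  then obtain c where c: "\<And>n. c n \<in> C" "\<And>n. z n \<in> c n" by metis
  show "\<exists>C'. C' \<subseteq> C \<and> finite C' \<and> insert l (range z) \<subseteq> \<Union>C'"
  proof (intro exI[of _ "insert c0 (c ` {..<N})"] conjI)
    show "insert c0 (c ` {..<N}) \<subseteq> C" using c0 c by blast
    show "finite (insert c0 (c ` {..<N}))" by simp
    show "insert l (range z) \<subseteq> \<Union> (insert c0 (c ` {..<N}))"
    proof
      fix p assume "p \<in> insert l (range z)"
      then consider "p = l" | n where "p = z n" by blast
      thus "p \<in> \<Union> (insert c0 (c ` {..<N}))"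
      proof cases
        case 1 thus ?thesis using c0 by blast
      next
        case (2 n) thus ?thesis
        proof (cases "n < N")
          case True thus ?thesis using 2 c by blast
        next
          case False thus ?thesis using 2 N by force
        qed
      qed
    qed
  qed
qed

lemma compactin_dual_bounded_on_compact:
  fixes K' :: "('a::complex_normed_vector \<Rightarrow> complex) set"
  assumes cK': "compactin dual_topology K'" and K: "compact K"
  shows "\<exists>N::nat. \<forall>\<phi>\<in>K'. \<forall>k\<in>K. cmod (\<phi> k) < real N"
proof -
  define g where "g n = {\<phi>\<in>(cdual::('a\<Rightarrow>complex) set). \<phi> ` K \<subseteq> ball 0 (real n)}" for n :: nat
  have og: "openin dual_topology (g n)" for n unfolding dual_topology_def g_def
    by (rule topology_generated_by_Basis) (use K in blast)
  have sub: "K' \<subseteq> cdual" using compactin_subset_topspace[OF cK'] dual_topspace by blast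
  have cov: "K' \<subseteq> \<Union>(range g)"
  proof
    fix \<phi> assume \<phi>: "\<phi> \<in> K'"
    hence "continuous_on UNIV \<phi>" using sub cdual_cont by blast
    hence "compact (\<phi> ` K)" using compact_continuous_image continuous_on_subset K by blast
    then obtain B where B: "\<And>w. w \<in> \<phi> ` K \<Longrightarrow> norm w \<le> B"
      using compact_imp_bounded bounded_iff by metis
    obtain n :: nat where n: "B < real n" using reals_Archimedean2 by blast
    have "\<phi> \<in> g n" unfolding g_def using \<phi> sub B n by force
    thus "\<phi> \<in> \<Union>(range g)" by blast
  qed
  obtain F where F: "finite F" "F \<subseteq> range g" "K' \<subseteq> \<Union>F"
    using cK' og cov unfolding compactin_def by (metis (no_types, lifting) imageE)
  obtain I where I: "finite I" "F = g ` I" using finite_subset_image[OF F(1,2)] by blast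
  define N where "N = Max (insert 0 I)"
  have mono: "n \<le> N \<Longrightarrow> g n \<subseteq> g N" for n unfolding g_def by force
  have "K' \<subseteq> g N"
  proof
    fix \<phi> assume "\<phi> \<in> K'"
    then obtain n where "n \<in> I" "\<phi> \<in> g n" using F(3) I(2) by blast
    moreover have "n \<le> N" unfolding N_def using I(1) \<open>n \<in> I\<close> by simp
    ultimately show "\<phi> \<in> g N" using mono by blast
  qed
  thus ?thesis unfolding g_def by (intro exI[of _ N]) force
qed

lemma compactin_dual_bounded:
  fixes K' :: "('a::complex_normed_vector \<Rightarrow> complex) set"
  assumes cK': "compactin dual_topology K'"
  shows "\<exists>M>0. \<forall>\<phi>\<in>K'. \<forall>y. cmod (\<phi> y) \<le> M * norm y"
proof (rule ccontr)
  assume "\<not> ?thesis"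
  hence "\<forall>n::nat. \<exists>\<phi>\<in>K'. \<exists>y. cmod (\<phi> y) > (real n + 1)^2 * norm y"
  proof (intro allI)
    fix n :: nat
    assume a: "\<not> (\<exists>M>0. \<forall>\<phi>\<in>K'. \<forall>y. cmod (\<phi> y) \<le> M * norm y)"
    have pos: "(real n + 1)^2 > 0" by simp
    hence "\<not> (\<forall>\<phi>\<in>K'. \<forall>y. cmod (\<phi> y) \<le> (real n + 1)^2 * norm y)" using a by blast
    thus "\<exists>\<phi>\<in>K'. \<exists>y. cmod (\<phi> y) > (real n + 1)^2 * norm y" by (auto simp: not_le)
  qed
  then obtain \<phi> y where \<phi>: "\<And>n. \<phi> n \<in> K'" and y: "\<And>n. cmod (\<phi> n (y n)) > (real n + 1)^2 * norm (y n)"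
    by metis
  have sub: "K' \<subseteq> cdual" using compactin_subset_topspace[OF cK'] dual_topspace by blast
  have lin: "clinear_fun (\<phi> n)" for n using \<phi> sub cdual_clinear by blast
  have yn: "y n \<noteq> 0" for n using y[of n] clinear_zero[OF lin] by force
  define z where "z n = (1 / ((real n + 1) * norm (y n))) *\<^sub>R y n" for n
  have nz: "norm (z n) = 1 / (real n + 1)" for n unfolding z_def using yn by simp
  have big: "cmod (\<phi> n (z n)) > real n + 1" for n
  proof -
    have "cmod (\<phi> n (z n)) = cmod (\<phi> n (y n)) / ((real n + 1) * norm (y n))"
    proof -
      have e: "(complex_of_nat n + 1) * complex_of_real (norm (y n)) = complex_of_real ((real n + 1) * norm (y n))" by simp
      have p: "(real n + 1) * norm (y n) > 0" using yn by simp
      show ?thesis unfolding z_def clinear_scaleR[OF lin]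
        using p by (simp add: e norm_divide del: of_real_mult)
    qed
    moreover have "cmod (\<phi> n (y n)) / ((real n + 1) * norm (y n)) > real n + 1"
    proof -
      have p: "(real n + 1) * norm (y n) > 0" using yn by simp
      have "(real n + 1) * ((real n + 1) * norm (y n)) < cmod (\<phi> n (y n))"
        using y[of n] by (simp add: power2_eq_square mult.assoc)
      thus ?thesis by (simp add: pos_less_divide_eq[OF p])
    qed
    ultimately show ?thesis by simp
  qed
  have "z \<longlonglongrightarrow> 0"
  proof (rule tendsto_norm_zero_cancel)
    have "(\<lambda>n. 1 / (real n + 1)) \<longlonglongrightarrow> 0"
      using LIMSEQ_inverse_real_of_nat by (simp add: inverse_eq_divide add.commute)
    thus "(\<lambda>n. norm (z n)) \<longlonglongrightarrow> 0" unfolding nz .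
  qed
  hence "compact (insert 0 (range z))" by (rule compact_convergent_insert)
  from compactin_dual_bounded_on_compact[OF cK' this] obtain N :: nat
    where "\<forall>\<phi>\<in>K'. \<forall>k\<in>insert 0 (range z). cmod (\<phi> k) < real N" by blast
  hence "cmod (\<phi> N (z N)) < real N" using \<phi> by blast
  thus False using big[of N] by linarith
qed

lemma gen_topo_le:
  assumes "\<And>s. s \<in> S1 \<Longrightarrow> openin (topology_generated_by S2) s"
  shows "openin (topology_generated_by S1) u \<Longrightarrow> openin (topology_generated_by S2) u"
proof -
  have h: "\<And>s. s \<in> S1 \<Longrightarrow> generate_topology_on S2 s"
    using assms unfolding openin_topology_generated_by_iff .
  show "openin (topology_generated_by S1) u \<Longrightarrow> openin (topology_generated_by S2) u"
    unfolding openin_topology_generated_by_iff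
    by (rule generate_topology_on_coarsest[OF istopology_generate_topology_on h])
qed

lemma MaxA_csub: "V \<in> MaxA \<Longrightarrow> csubspace V"
  unfolding MaxA_def by blast

lemma lv_topspace: "topspace (lower_vietoris :: 'a::complex_normed_vector set topology) = MaxA"
proof -
  let ?S = "{{V\<in>(MaxA::'a set set). V \<inter> U \<noteq> {}} | U. open U}"
  have m: "{V\<in>(MaxA::'a set set). V \<inter> UNIV \<noteq> {}} \<in> ?S"
    by (rule CollectI, rule exI[of _ UNIV]) simp
  have e: "{V\<in>(MaxA::'a set set). V \<inter> UNIV \<noteq> {}} = MaxA"
  proof (intro set_eqI iffI)
    fix V assume "V \<in> (MaxA::'a set set)"
    moreover have "0 \<in> V" using csubspace_0[OF MaxA_csub[OF calculation]] .
    ultimately show "V \<in> {V\<in>(MaxA::'a set set). V \<inter> UNIV \<noteq> {}}" by blast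
  qed simp
  have "\<Union>?S \<subseteq> MaxA" by blast
  moreover have "MaxA \<subseteq> \<Union>?S"
  proof
    fix V assume "V \<in> (MaxA::'a set set)"
    hence "V \<in> {V\<in>(MaxA::'a set set). V \<inter> UNIV \<noteq> {}}" using e by simp
    thus "V \<in> \<Union>?S" by (rule UnionI[OF m])
  qed
  ultimately show ?thesis unfolding lower_vietoris_def topology_generated_by_topspace by (rule antisym)
qed

lemma annih_open_lv:
  fixes K' :: "('a::complex_normed_vector \<Rightarrow> complex) set"
  assumes cK': "compactin dual_topology K'"
  shows "openin lower_vietoris {V\<in>MaxA. annih V \<inter> K' = {}}"
proof (subst openin_subopen, intro ballI)
  fix V0 assume V0: "V0 \<in> {V\<in>(MaxA::'a set set). annih V \<inter> K' = {}}"
  obtain M where M: "M > 0" "\<And>\<phi> y. \<phi> \<in> K' \<Longrightarrow> cmod (\<phi> y) \<le> M * norm y"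
    using compactin_dual_bounded[OF cK'] by blast
  have sub: "K' \<subseteq> cdual" using compactin_subset_topspace[OF cK'] dual_topspace by blast
  define W where "W v = {\<phi>\<in>(cdual::('a\<Rightarrow>complex) set). \<phi> ` {v} \<subseteq> {z. 1 < cmod z}}" for v
  have oW: "openin dual_topology (W v)" for v unfolding dual_topology_def W_def
  proof (rule topology_generated_by_Basis)
    have "{z::complex. 1 < cmod z} = - cball 0 1" by auto
    hence o: "open {z::complex. 1 < cmod z}" by (simp add: open_Compl)
    show "{\<phi>\<in>(cdual::('a\<Rightarrow>complex) set). \<phi> ` {v} \<subseteq> {z. 1 < cmod z}} \<in> {{\<phi>\<in>cdual. \<phi> ` K \<subseteq> U} | K U. compact K \<and> open U}"
      using o compact_sing[of v] by blast
  qed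
  have csV0: "csubspace V0" using V0 MaxA_csub by blast
  have cov: "K' \<subseteq> \<Union>(W ` V0)"
  proof
    fix \<phi> assume \<phi>: "\<phi> \<in> K'"
    hence "\<phi> \<notin> annih V0" using V0 by blast
    then obtain v where v: "v \<in> V0" "\<phi> v \<noteq> 0" using \<phi> sub unfolding annih_def by blast
    define v' where "v' = scaleC (2 / \<phi> v) v"
    have "v' \<in> V0" unfolding v'_def using csubspace_scaleC[OF csV0 v(1)] .
    moreover have "\<phi> v' = 2"
    proof -
      have "clinear_fun \<phi>" using \<phi> sub cdual_clinear by blast
      hence "\<phi> v' = (2 / \<phi> v) * \<phi> v" unfolding v'_def clinear_fun_def by blast
      thus ?thesis using v(2) by simp
    qed
    moreover have "\<phi> \<in> W v'" unfolding W_def using \<phi> sub calculation(2) by auto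
    ultimately show "\<phi> \<in> \<Union>(W ` V0)" by blast
  qed
  obtain F where F: "finite F" "F \<subseteq> W ` V0" "K' \<subseteq> \<Union>F"
    using cK' oW cov unfolding compactin_def by (metis (no_types, lifting) imageE)
  obtain D where D: "D \<subseteq> V0" "finite D" "F = W ` D" using finite_subset_image[OF F(1,2)] by blast
  define T where "T = \<Inter>(insert MaxA ((\<lambda>v. {V\<in>(MaxA::'a set set). V \<inter> ball v (1/M) \<noteq> {}}) ` D))"
  have "openin lower_vietoris T" unfolding T_def
  proof (rule openin_Inter)
    show "finite (insert MaxA ((\<lambda>v. {V\<in>(MaxA::'a set set). V \<inter> ball v (1/M) \<noteq> {}}) ` D))" using D by simp
    show "insert MaxA ((\<lambda>v. {V\<in>(MaxA::'a set set). V \<inter> ball v (1/M) \<noteq> {}}) ` D) \<noteq> {}" by simp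
    fix S assume "S \<in> insert MaxA ((\<lambda>v. {V\<in>(MaxA::'a set set). V \<inter> ball v (1/M) \<noteq> {}}) ` D)"
    then consider "S = MaxA" | v where "S = {V\<in>(MaxA::'a set set). V \<inter> ball v (1/M) \<noteq> {}}" by blast
    thus "openin lower_vietoris S"
    proof cases
      case 1 thus ?thesis using lv_topspace openin_topspace by metis
    next
      case 2 thus ?thesis unfolding lower_vietoris_def
        by (intro topology_generated_by_Basis) blast
    qed
  qed
  moreover have "V0 \<in> T"
  proof -
    have "V0 \<in> MaxA" using V0 by blast
    moreover have "V0 \<inter> ball v (1/M) \<noteq> {}" if "v \<in> D" for v
    proof -
      have "v \<in> V0" using that D(1) by blast
      moreover have "v \<in> ball v (1/M)" using M(1) by simp
      ultimately show ?thesis by blast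
    qed
    ultimately show ?thesis unfolding T_def by blast
  qed
  moreover have "T \<subseteq> {V\<in>MaxA. annih V \<inter> K' = {}}"
  proof
    fix V assume VT: "V \<in> T"
    have VM: "V \<in> MaxA" using VT T_def by blast
    have "annih V \<inter> K' = {}"
    proof (rule ccontr)
      assume "annih V \<inter> K' \<noteq> {}"
      then obtain \<phi> where \<phi>: "\<phi> \<in> annih V" "\<phi> \<in> K'" by blast
      then obtain v where v: "v \<in> D" "\<phi> \<in> W v" using F(3) D(3) by blast
      have gt: "1 < cmod (\<phi> v)" using v(2) unfolding W_def by simp
      have "V \<inter> ball v (1/M) \<noteq> {}" using VT v(1) unfolding T_def by blast
      then obtain w where w: "w \<in> V" "dist v w < 1/M" by auto
      have "\<phi> w = 0" using \<phi>(1) w(1) unfolding annih_def by blast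
      moreover have "\<phi> (v - w) = \<phi> v - \<phi> w" using clinear_diff[OF cdual_clinear, of \<phi>] \<phi>(2) sub by blast
      ultimately have "cmod (\<phi> v) = cmod (\<phi> (v - w))" by simp
      also have "\<dots> \<le> M * norm (v - w)" using M(2) \<phi>(2) by blast
      also have "\<dots> < M * (1/M)" using w(2) M(1) by (intro mult_strict_left_mono) (simp_all add: dist_norm)
      also have "\<dots> = 1" using M(1) by simp
      finally show False using gt by simp
    qed
    thus "V \<in> {V\<in>MaxA. annih V \<inter> K' = {}}" using VM by blast
  qed
  ultimately show "\<exists>T. openin lower_vietoris T \<and> V0 \<in> T \<and> T \<subseteq> {V\<in>MaxA. annih V \<inter> K' = {}}" by blast
qed

lemma lv_open_annih:
  fixes U :: "'a::complex_normed_vector set"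
  assumes U: "open U"
  shows "openin annih_topology {V\<in>MaxA. V \<inter> U \<noteq> {}}"
proof (subst openin_subopen, intro ballI)
  fix V0 assume V0: "V0 \<in> {V\<in>(MaxA::'a set set). V \<inter> U \<noteq> {}}"
  then obtain x where x: "x \<in> V0" "x \<in> U" by blast
  obtain r where r: "r > 0" "ball x r \<subseteq> U" using U x(2) open_contains_ball by blast
  define K' where "K' = {\<phi>\<in>(cdual::('a\<Rightarrow>complex) set). \<phi> x = 1 \<and> (\<forall>y. cmod (\<phi> y) \<le> (1/r) * norm y)}"
  have cK': "compactin dual_topology K'" unfolding K'_def by (rule compact_Kprime) (use r in simp)
  define T where "T = {V\<in>(MaxA::'a set set). annih V \<inter> K' = {}}"
  have "openin annih_topology T" unfolding T_def annih_topology_def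
    by (rule topology_generated_by_Basis) (use cK' in blast)
  moreover have "V0 \<in> T" unfolding T_def K'_def annih_def using V0 x(1) by auto
  moreover have "T \<subseteq> {V\<in>MaxA. V \<inter> U \<noteq> {}}"
  proof
    fix V assume VT: "V \<in> T"
    have VM: "V \<in> MaxA" using VT T_def by blast
    have "V \<inter> U \<noteq> {}"
    proof
      assume e: "V \<inter> U = {}"
      have "\<forall>v\<in>V. r \<le> norm (x - v)"
      proof
        fix v assume "v \<in> V"
        hence "v \<notin> ball x r" using e r(2) by blast
        thus "r \<le> norm (x - v)" by (simp add: dist_norm)
      qed
      from complex_HB[OF MaxA_csub[OF VM] r(1) this] obtain \<phi> where
        "\<phi> \<in> cdual" "\<phi> x = 1" "\<forall>v\<in>V. \<phi> v = 0" "\<forall>y. cmod (\<phi> y) \<le> (1/r) * norm y" by blast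
      hence "\<phi> \<in> annih V \<inter> K'" unfolding annih_def K'_def by blast
      thus False using VT T_def by blast
    qed
    thus "V \<in> {V\<in>MaxA. V \<inter> U \<noteq> {}}" using VM by blast
  qed
  ultimately show "\<exists>T. openin annih_topology T \<and> V0 \<in> T \<and> T \<subseteq> {V\<in>MaxA. V \<inter> U \<noteq> {}}" by blast
qed

theorem lemma7p13:
  shows "(lower_vietoris :: 'a::complex_normed_vector set topology) = annih_topology"
proof -
  define S1 where "S1 = {{V\<in>(MaxA::'a set set). V \<inter> U \<noteq> {}} | U. open U}"
  define S2 where "S2 = {{V\<in>(MaxA::'a set set). annih V \<inter> K' = {}} | K'. compactin dual_topology K'}"
  have L: "(lower_vietoris :: 'a set topology) = topology_generated_by S1" unfolding S1_def lower_vietoris_def ..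
  have A: "(annih_topology :: 'a set topology) = topology_generated_by S2" unfolding S2_def annih_topology_def ..
  have h1: "openin (topology_generated_by S2) s" if "s \<in> S1" for s
    using that lv_open_annih unfolding S1_def A[symmetric] by blast
  have h2: "openin (topology_generated_by S1) s" if "s \<in> S2" for s
    using that annih_open_lv unfolding S2_def L[symmetric] by blast
  have "topology_generated_by S1 = topology_generated_by S2"
    unfolding topology_eq using gen_topo_le[OF h1] gen_topo_le[OF h2] by blast
  thus ?thesis using L A by simp
qed

end
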